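(* Let $\alpha>0$, $\alpha\neq1$, and let $\rho,\sigma$ be density operators on a finite-dimensional Hilbert space with $\operatorname{supp}(\rho)\subseteq\operatorname{supp}(\sigma)$. Then $$S_{\alpha}(\rho\|\sigma)=\hat{D}_{1/\alpha}\big(\rho^{(\alpha)}\|\sigma^{(\alpha)}\big),$$ where $\rho^{(\alpha)}=\rho^{\alpha}/\operatorname{Tr}(\rho^{\alpha})$ and $\sigma^{(\alpha)}=\sigma^{\alpha}/\operatorname{Tr}(\sigma^{\alpha})$.
   Context: A density operator is a positive semidefinite operator of unit trace; $\operatorname{supp}$ denotes the span of eigenvectors with nonzero eigenvalues. The quantum relative $\alpha$-entropy is $S_{\alpha}(\rho\|\sigma)=\frac{\alpha}{1-\alpha}\log\operatorname{Tr}(\rho\sigma^{\alpha-1})-\frac{1}{1-\alpha}\log\operatorname{Tr}(\rho^{\alpha})+\log\operatorname{Tr}(\sigma^{\alpha})$ (negative powers of $\sigma$ taken on its support). The Petz–Rényi relative entropy of order $\beta>0$, $\beta\ne1$, is $\hat{D}_{\beta}(\rho\|\sigma)=\frac{1}{\beta-1}\log\operatorname{Tr}(\rho^{\beta}\sigma^{1-\beta})$. *)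

theory Defs
  imports Complex_Main "Jordan_Normal_Form.Matrix"
begin

definition mtrace :: "complex mat \<Rightarrow> complex" where
  "mtrace A = (\<Sum>i<dim_row A. A $$ (i,i))"

definition adj :: "complex mat \<Rightarrow> complex mat" where
  "adj A = mat (dim_col A) (dim_row A) (\<lambda>(i,j). cnj (A $$ (j,i)))"

definition unitary :: "nat \<Rightarrow> complex mat \<Rightarrow> bool" where
  "unitary n U \<longleftrightarrow> U \<in> carrier_mat n n \<and> U * adj U = 1\<^sub>m n \<and> adj U * U = 1\<^sub>m n"

definition hermitian :: "nat \<Rightarrow> complex mat \<Rightarrow> bool" where
  "hermitian n A \<longleftrightarrow> A \<in> carrier_mat n n \<and> adj A = A"

definition psd :: "nat \<Rightarrow> complex mat \<Rightarrow> bool" where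
  "psd n A \<longleftrightarrow> hermitian n A \<and>
     (\<forall>v \<in> carrier_vec n. 0 \<le> Re (scalar_prod (map_vec cnj v) (A *\<^sub>v v)))"

definition density :: "nat \<Rightarrow> complex mat \<Rightarrow> bool" where
  "density n A \<longleftrightarrow> psd n A \<and> mtrace A = 1"

definition rdiag :: "nat \<Rightarrow> (nat \<Rightarrow> real) \<Rightarrow> complex mat" where
  "rdiag n d = mat n n (\<lambda>(i,j). if i = j then complex_of_real (d i) else 0)"

text \<open>Since 0 powr t = 0,
  powers (including negative ones) are taken on the support only.\<close>
definition mpow :: "nat \<Rightarrow> complex mat \<Rightarrow> real \<Rightarrow> complex mat" where
  "mpow n A t = (SOME B. \<exists>U d. unitary n U \<and> A = U * rdiag n d * adj U \<and>
                      B = U * rdiag n (\<lambda>i. d i powr t) * adj U)"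

text \<open>Support: span of the eigenvectors with nonzero eigenvalues (finite sums of such
  eigenvectors, the scalars being absorbed into the eigenvectors).\<close>
definition supp :: "nat \<Rightarrow> complex mat \<Rightarrow> complex vec set" where
  "supp n A = {foldr (+) vs (0\<^sub>v n) | vs.
      \<forall>v \<in> set vs. v \<in> carrier_vec n \<and> (\<exists>c. c \<noteq> 0 \<and> A *\<^sub>v v = c \<cdot>\<^sub>v v)}"

definition rtr :: "complex mat \<Rightarrow> real" where
  "rtr A = Re (mtrace A)"

definition S_alpha :: "nat \<Rightarrow> real \<Rightarrow> complex mat \<Rightarrow> complex mat \<Rightarrow> real" where
  "S_alpha n \<alpha> \<rho> \<sigma> =
     \<alpha> / (1 - \<alpha>) * ln (rtr (\<rho> * mpow n \<sigma> (\<alpha> - 1)))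
     - 1 / (1 - \<alpha>) * ln (rtr (mpow n \<rho> \<alpha>))
     + ln (rtr (mpow n \<sigma> \<alpha>))"

definition petz :: "nat \<Rightarrow> real \<Rightarrow> complex mat \<Rightarrow> complex mat \<Rightarrow> real" where
  "petz n \<beta> \<rho> \<sigma> = 1 / (\<beta> - 1) * ln (rtr (mpow n \<rho> \<beta> * mpow n \<sigma> (1 - \<beta>)))"

definition normpow :: "nat \<Rightarrow> complex mat \<Rightarrow> real \<Rightarrow> complex mat" where
  "normpow n A \<alpha> = (1 / mtrace (mpow n A \<alpha>)) \<cdot>\<^sub>m mpow n A \<alpha>"

end

theory Submission
  imports Defs "Jordan_Normal_Form.Schur_Decomposition" "HOL-Library.Complex_Order"
begin

lemma adj_carrier[simp]: "A \<in> carrier_mat n m \<Longrightarrow> adj A \<in> carrier_mat m n"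
  unfolding adj_def by auto
lemma adj_dims[simp]: "dim_row (adj A) = dim_col A" "dim_col (adj A) = dim_row A"
  unfolding adj_def by auto
lemma adj_index[simp]: "i < dim_col A \<Longrightarrow> j < dim_row A \<Longrightarrow> adj A $$ (i,j) = cnj (A $$ (j,i))"
  unfolding adj_def by auto
lemma adj_adj[simp]: "adj (adj A) = A"
  by (rule eq_matI) auto
lemma adj_mult: assumes "A \<in> carrier_mat n m" "B \<in> carrier_mat m k"
  shows "adj (A * B) = adj B * adj A"
  by (rule eq_matI, insert assms, auto simp: scalar_prod_def mult.commute)
lemma adj_one[simp]: "adj (1\<^sub>m n) = 1\<^sub>m n"
  by (rule eq_matI) auto
lemma adj_zero[simp]: "adj (0\<^sub>m n m) = 0\<^sub>m m n"
  by (rule eq_matI) auto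

lemma rdiag_carrier[simp]: "rdiag n d \<in> carrier_mat n n"
  unfolding rdiag_def by auto
lemma rdiag_dims[simp]: "dim_row (rdiag n d) = n" "dim_col (rdiag n d) = n"
  unfolding rdiag_def by auto
lemma rdiag_index[simp]: "i < n \<Longrightarrow> j < n \<Longrightarrow> rdiag n d $$ (i,j) = (if i = j then complex_of_real (d i) else 0)"
  unfolding rdiag_def by auto
lemma adj_rdiag[simp]: "adj (rdiag n d) = rdiag n d"
  by (rule eq_matI) auto

lemma sum_delta_mult1: "i < (n::nat) \<Longrightarrow> (\<Sum>k = 0..<n. (if i = k then a else 0) * f k) = a * (f i :: 'a::semiring_0)"
  by (subst sum.cong[OF refl, of _ _ "\<lambda>k. if i = k then a * f k else 0"], simp, subst sum.delta', auto)
lemma sum_delta_mult2: "j < (n::nat) \<Longrightarrow> (\<Sum>k = 0..<n. f k * (if k = j then a k else 0)) = (f j :: 'a::semiring_0) * a j"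
  by (subst sum.cong[OF refl, of _ _ "\<lambda>k. if k = j then f k * a k else 0"], simp, subst sum.delta, auto)

lemma rdiag_mult_left: assumes "W \<in> carrier_mat n m"
  shows "rdiag n d * W = mat n m (\<lambda>(i,j). d i * W $$ (i,j))"
proof (rule eq_matI)
  fix i j assume ij: "i < dim_row (mat n m (\<lambda>(i,j). d i * W $$ (i,j)))" "j < dim_col (mat n m (\<lambda>(i,j). d i * W $$ (i,j)))"
  show "(rdiag n d * W) $$ (i,j) = mat n m (\<lambda>(i,j). d i * W $$ (i,j)) $$ (i,j)" using ij assms by (simp add: scalar_prod_def sum_delta_mult1 sum_delta_mult2)
qed (use assms in auto)

lemma rdiag_mult_right: assumes "W \<in> carrier_mat m n"
  shows "W * rdiag n d = mat m n (\<lambda>(i,j). W $$ (i,j) * d j)"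
proof (rule eq_matI)
  fix i j assume ij: "i < dim_row (mat m n (\<lambda>(i,j). W $$ (i,j) * d j))" "j < dim_col (mat m n (\<lambda>(i,j). W $$ (i,j) * d j))"
  show "(W * rdiag n d) $$ (i,j) = mat m n (\<lambda>(i,j). W $$ (i,j) * d j) $$ (i,j)" using ij assms by (simp add: scalar_prod_def sum_delta_mult1 sum_delta_mult2)
qed (use assms in auto)

lemma mtrace_comm: assumes "A \<in> carrier_mat n m" "B \<in> carrier_mat m n"
  shows "mtrace (A * B) = mtrace (B * A)"
proof -
  have "mtrace (A * B) = (\<Sum>i<n. \<Sum>k<m. A $$ (i,k) * B $$ (k,i))"
    using assms by (auto simp: mtrace_def scalar_prod_def atLeast0LessThan intro!: sum.cong)
  also have "\<dots> = (\<Sum>k<m. \<Sum>i<n. B $$ (k,i) * A $$ (i,k))"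
    by (subst sum.swap) (simp add: mult.commute)
  also have "\<dots> = mtrace (B * A)"
    using assms by (auto simp: mtrace_def scalar_prod_def atLeast0LessThan intro!: sum.cong)
  finally show ?thesis .
qed

lemma massoc: "A \<in> carrier_mat n n \<Longrightarrow> B \<in> carrier_mat n n \<Longrightarrow> C \<in> carrier_mat n n \<Longrightarrow> A * B * C = A * (B * C)"
  by (rule assoc_mult_mat)
lemma sq_mult: "A \<in> carrier_mat n n \<Longrightarrow> B \<in> carrier_mat n n \<Longrightarrow> A * B \<in> carrier_mat n n"
  by auto

lemma unitaryD: assumes "unitary n U"
  shows "U \<in> carrier_mat n n" "adj U \<in> carrier_mat n n" "U * adj U = 1\<^sub>m n" "adj U * U = 1\<^sub>m n"
  using assms unfolding unitary_def by auto

lemma unitary_cancel: assumes "unitary n U" "X \<in> carrier_mat n n"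
  shows "U * (adj U * X) = X" "adj U * (U * X) = X"
proof -
  note u = unitaryD[OF assms(1)]
  have "U * (adj U * X) = (U * adj U) * X" by (rule massoc[symmetric]) (use u assms in auto)
  thus "U * (adj U * X) = X" using u assms by simp
  have "adj U * (U * X) = (adj U * U) * X" by (rule massoc[symmetric]) (use u assms in auto)
  thus "adj U * (U * X) = X" using u assms by simp
qed

lemma unitary_adj: "unitary n U \<Longrightarrow> unitary n (adj U)"
  unfolding unitary_def by auto

lemma unitary_mult: assumes "unitary n U" "unitary n V" shows "unitary n (U * V)"
proof -
  note u = unitaryD[OF assms(1)] and v = unitaryD[OF assms(2)]
  have "U * V * adj (U * V) = U * (V * (adj V * adj U))"
    using u v by (simp add: adj_mult[of _ n n _ n] massoc[where n=n] sq_mult[where n=n])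
  also have "\<dots> = 1\<^sub>m n" using u v unitary_cancel[OF assms(2), of "adj U"] by simp
  finally have 1: "U * V * adj (U * V) = 1\<^sub>m n" .
  have "adj (U * V) * (U * V) = adj V * (adj U * (U * V))"
    using u v by (simp add: adj_mult[of _ n n _ n] massoc[where n=n] sq_mult[where n=n])
  also have "\<dots> = 1\<^sub>m n" using u v unitary_cancel[OF assms(1), of V] by simp
  finally show ?thesis using 1 u v unfolding unitary_def by auto
qed

lemma diag_uniq: assumes U: "unitary n U" and V: "unitary n V"
  and eq: "U * rdiag n d * adj U = V * rdiag n e * adj V"
  shows "U * rdiag n (\<lambda>i. f (d i)) * adj U = V * rdiag n (\<lambda>i. f (e i)) * adj V"
proof -
  note u = unitaryD[OF U] and v = unitaryD[OF V]
  define W where "W = adj U * V"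
  have W: "W \<in> carrier_mat n n" using u v unfolding W_def by auto
  have "rdiag n d * W = adj U * (U * (rdiag n d * adj U * V))"
    using u v unfolding W_def by (simp add: massoc[where n=n] sq_mult[where n=n] unitary_cancel[OF U])
  also have "U * (rdiag n d * adj U * V) = (U * rdiag n d * adj U) * V"
    using u v by (simp add: massoc[where n=n] sq_mult[where n=n])
  also have "\<dots> = V * (rdiag n e * (adj V * V))" unfolding eq using u v by (simp add: massoc[where n=n] sq_mult[where n=n])
  also have "\<dots> = V * rdiag n e" using v by simp
  finally have "rdiag n d * W = adj U * (V * rdiag n e)" .
  also have "\<dots> = W * rdiag n e" unfolding W_def using u v by (simp add: massoc[where n=n] sq_mult[where n=n])
  finally have comm: "rdiag n d * W = W * rdiag n e" .
  have entry: "d i * W $$ (i,j) = W $$ (i,j) * e j" if "i < n" "j < n" for i j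
    using arg_cong[OF comm, of "\<lambda>M. M $$ (i,j)"] that W
    by (simp add: rdiag_mult_left rdiag_mult_right)
  have commf: "rdiag n (\<lambda>i. f (d i)) * W = W * rdiag n (\<lambda>i. f (e i))"
  proof -
    have "f (d i) * W $$ (i,j) = W $$ (i,j) * f (e j)" if "i < n" "j < n" for i j
    proof (cases "W $$ (i,j) = 0")
      case False
      with entry[OF that] have "complex_of_real (d i) = e j" by (simp add: mult.commute)
      thus ?thesis by simp
    qed simp
    thus ?thesis using W unfolding rdiag_mult_left[OF W] rdiag_mult_right[OF W] by (intro eq_matI) auto
  qed
  have WV: "W * adj V = adj U" unfolding W_def using u v by (simp add: massoc[where n=n] sq_mult[where n=n])
  have "U * rdiag n (\<lambda>i. f (d i)) * adj U = U * (rdiag n (\<lambda>i. f (d i)) * W * adj V)"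
    unfolding WV[symmetric] using u v W by (simp add: massoc[where n=n] sq_mult[where n=n])
  also have "\<dots> = U * (W * (rdiag n (\<lambda>i. f (e i)) * adj V))" unfolding commf using u v W by (simp add: massoc[where n=n] sq_mult[where n=n])
  also have "\<dots> = U * (adj U * (V * (rdiag n (\<lambda>i. f (e i)) * adj V)))" unfolding W_def using u v by (simp add: massoc[where n=n] sq_mult[where n=n])
  also have "\<dots> = V * rdiag n (\<lambda>i. f (e i)) * adj V" using unitary_cancel[OF U, of "V * (rdiag n (\<lambda>i. f (e i)) * adj V)"] u v
    by (simp add: massoc[where n=n] sq_mult[where n=n])
  finally show ?thesis .
qed

lemma mpow_eq: assumes U: "unitary n U" and A: "A = U * rdiag n d * adj U"
  shows "mpow n A t = U * rdiag n (\<lambda>i. d i powr t) * adj U"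
proof -
  let ?P = "\<lambda>B. \<exists>U d. unitary n U \<and> A = U * rdiag n d * adj U \<and> B = U * rdiag n (\<lambda>i. d i powr t) * adj U"
  have "?P (U * rdiag n (\<lambda>i. d i powr t) * adj U)" using U A by blast
  from someI_ex[of ?P, OF exI, OF this] obtain V e where V: "unitary n V" and
    Ae: "A = V * rdiag n e * adj V" and eq: "mpow n A t = V * rdiag n (\<lambda>i. e i powr t) * adj V"
    unfolding mpow_def by blast
  show ?thesis unfolding eq
    by (rule diag_uniq[OF V U, of e d "\<lambda>x. x powr t"]) (use A Ae in simp)
qed

lemma cnorm_pos: fixes w :: "complex vec" assumes "w \<in> carrier_vec n" "w \<noteq> 0\<^sub>v n"
  shows "Re (w \<bullet>c w) > 0" "w \<bullet>c w = complex_of_real (Re (w \<bullet>c w))"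
proof -
  have "w \<bullet>c w > 0" using assms by simp
  thus "Re (w \<bullet>c w) > 0" "w \<bullet>c w = complex_of_real (Re (w \<bullet>c w))"
    by (auto simp: less_complex_def complex_eq_iff)
qed

lemma unit_completion: fixes v :: "complex vec"
  assumes v: "v \<in> carrier_vec n" and v0: "v \<noteq> 0\<^sub>v n"
  shows "\<exists>W c. unitary n W \<and> col W 0 = c \<cdot>\<^sub>v v"
proof -
  interpret cof_vec_space n "TYPE(complex)" .
  define b where "b = basis_completion v"
  define ws where "ws = gram_schmidt n b"
  from basis_completion[OF v v0, folded b_def]
  have span_b: "span (set b) = carrier_vec n" and dist_b: "distinct b" 
    and indep: "\<not> lin_dep (set b)" and b: "set b \<subseteq> carrier_vec n" and hdb: "hd b = v" 
    and len_b: "length b = n" by auto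
  have n: "n \<noteq> 0"
  proof
    assume "n = 0"
    with v have "v = 0\<^sub>v n" by (intro eq_vecI) auto
    with v0 show False by simp
  qed
  from hdb len_b n obtain vs where bv: "b = v # vs" by (cases b, auto)
  from gram_schmidt_result[OF b dist_b indep refl, folded ws_def]
  have ws: "set ws \<subseteq> carrier_vec n" "corthogonal ws" "length ws = n" 
    by (auto simp: len_b)
  from gram_schmidt_hd[OF v, of vs, folded bv] have hdws: "hd ws = v" unfolding ws_def .
  have wsc: "ws ! i \<in> carrier_vec n" if "i < n" for i using ws that by auto
  have ws0: "ws ! i \<noteq> 0\<^sub>v n" if "i < n" for i
  proof
    assume "ws ! i = 0\<^sub>v n"
    hence "ws ! i \<bullet>c ws ! i = 0" using wsc[OF that] by simp
    with corthogonalD[OF ws(2), of i i] that ws(3) show False by auto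
  qed
  define c where "c i = complex_of_real (1 / sqrt (Re (ws ! i \<bullet>c ws ! i)))" for i
  define us where "us = map (\<lambda>i. c i \<cdot>\<^sub>v ws ! i) [0..<n]"
  define W where "W = mat_of_cols n us"
  have us: "length us = n" "\<And>i. i < n \<Longrightarrow> us ! i = c i \<cdot>\<^sub>v ws ! i" unfolding us_def by auto
  have usc: "us ! i \<in> carrier_vec n" if "i < n" for i using us wsc that by auto
  have W: "W \<in> carrier_mat n n" unfolding W_def using us by auto
  have colW: "col W i = us ! i" if "i < n" for i unfolding W_def using us usc that by simp
  have WW: "adj W * W = 1\<^sub>m n"
  proof (rule eq_matI)
    fix i j assume "i < dim_row (1\<^sub>m n)" "j < dim_col (1\<^sub>m n)"
    hence ij: "i < n" "j < n" by auto
    have "(adj W * W) $$ (i,j) = (\<Sum>k = 0..<n. cnj (W $$ (k,i)) * W $$ (k,j))"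
      using W ij by (auto simp: scalar_prod_def intro!: sum.cong)
    also have "\<dots> = col W j \<bullet>c col W i"
      using W ij by (auto simp: scalar_prod_def mult.commute intro!: sum.cong)
    also have "\<dots> = (c j * cnj (c i)) * (ws ! j \<bullet>c ws ! i)"
      unfolding colW[OF ij(1)] colW[OF ij(2)] us(2)[OF ij(1)] us(2)[OF ij(2)]
      using wsc[OF ij(1)] wsc[OF ij(2)] by (simp add: conjugate_smult_vec smult_scalar_prod_distrib[of _ n] scalar_prod_smult_distrib[of _ n])
    also have "\<dots> = (if i = j then 1 else 0)"
    proof (cases "i = j")
      case True
      note cp = cnorm_pos[OF wsc[OF ij(2)] ws0[OF ij(2)]]
      define r where "r = Re (ws ! j \<bullet>c ws ! j)"
      have eq: "ws ! j \<bullet>c ws ! j = complex_of_real r" using cp(2) unfolding r_def .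
      have r: "r > 0" using cp(1) unfolding r_def .
      have "(c j * cnj (c j)) * (ws ! j \<bullet>c ws ! j) = complex_of_real (1 / sqrt r * (1 / sqrt r) * r)"
        unfolding c_def r_def[symmetric] eq by (simp flip: of_real_mult)
      also have "\<dots> = 1" using r by (simp add: field_simps)
      finally show ?thesis using True by simp
    next
      case False
      with corthogonalD[OF ws(2), of j i] ij ws(3) show ?thesis by auto
    qed
    finally show "(adj W * W) $$ (i,j) = 1\<^sub>m n $$ (i,j)" using ij by simp
  qed (use W in auto)
  have "W * adj W = 1\<^sub>m n" by (rule mat_mult_left_right_inverse[OF _ W WW]) (use W in auto)
  hence uW: "unitary n W" using WW W unfolding unitary_def by auto
  have "col W 0 = c 0 \<cdot>\<^sub>v v" using colW[of 0] us(2)[of 0] n hdws ws(3)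
    by (metis hd_conv_nth length_0_conv not_gr_zero)
  thus ?thesis using uW by blast
qed

lemma spectral: "hermitian n A \<Longrightarrow> \<exists>U d. unitary n U \<and> A = U * rdiag n d * adj U"
proof (induction n arbitrary: A)
  case 0
  hence A: "A \<in> carrier_mat 0 0" unfolding hermitian_def by auto
  have "unitary 0 (1\<^sub>m 0)" unfolding unitary_def by auto
  moreover have "A = 1\<^sub>m 0 * rdiag 0 (\<lambda>_. 0) * adj (1\<^sub>m 0)" by (intro eq_matI) (use A in auto)
  ultimately show ?case by blast
next
  case (Suc m)
  define n where "n = Suc m"
  have A: "A \<in> carrier_mat n n" and adjA: "adj A = A" using Suc.prems unfolding hermitian_def n_def by auto
  obtain as where cp: "char_poly A = (\<Prod>a\<leftarrow>as. [:- a, 1:])" and las: "length as = n"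
    using char_poly_factorized[OF A] by blast
  then obtain a rest where as: "as = a # rest" unfolding n_def by (cases as) auto
  have "poly (char_poly A) a = 0" unfolding cp as by simp
  hence "eigenvalue A a" using eigenvalue_root_char_poly[OF A] by simp
  then obtain v where "eigenvector A v a" unfolding eigenvalue_def by blast
  hence v: "v \<in> carrier_vec n" and v0: "v \<noteq> 0\<^sub>v n" and Av: "A *\<^sub>v v = a \<cdot>\<^sub>v v"
    unfolding eigenvector_def using A by auto
  obtain W c where uW: "unitary n W" and colW: "col W 0 = c \<cdot>\<^sub>v v"
    using unit_completion[OF v v0] by blast
  note w = unitaryD[OF uW]
  have n0: "0 < n" unfolding n_def by simp
  have cw: "col W 0 \<in> carrier_vec n" using w n0 by auto
  have AcolW: "A *\<^sub>v col W 0 = a \<cdot>\<^sub>v col W 0"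
    unfolding colW using A v by (simp add: mult_mat_vec[OF A v] Av smult_smult_assoc mult.commute)
  define A' where "A' = adj W * A * W"
  have A': "A' \<in> carrier_mat n n" unfolding A'_def using w A by auto
  have adjA': "adj A' = A'" unfolding A'_def
    using w A by (simp add: adj_mult[of _ n n _ n] adjA massoc[where n=n] sq_mult[where n=n])
  have colA': "col A' 0 = a \<cdot>\<^sub>v unit_vec n 0"
  proof -
    have "col A' 0 = (adj W * A) *\<^sub>v col W 0" unfolding A'_def using w A n0 by (subst col_mult2[of _ n n _ n]) auto
    also have "\<dots> = adj W *\<^sub>v (a \<cdot>\<^sub>v col W 0)" using w A cw AcolW by (subst assoc_mult_mat_vec[of _ n n _ n]) auto
    also have "\<dots> = a \<cdot>\<^sub>v (adj W *\<^sub>v col W 0)" using w cw by (simp add: mult_mat_vec[of _ n n])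
    also have "adj W *\<^sub>v col W 0 = col (adj W * W) 0" using w n0 by (subst col_mult2[of _ n n _ n]) auto
    also have "\<dots> = unit_vec n 0" using w n0 by simp
    finally show ?thesis .
  qed
  have Ai0: "A' $$ (i,0) = (if i = 0 then a else 0)" if "i < n" for i
    using arg_cong[OF colA', of "\<lambda>x. x $ i"] that A' n0 by auto
  have A0j: "A' $$ (0,j) = (if j = 0 then cnj a else 0)" if "j < n" for j
  proof -
    have "A' $$ (0,j) = adj A' $$ (0,j)" using adjA' by simp
    also have "\<dots> = cnj (A' $$ (j,0))" using A' that n0 by simp
    finally show ?thesis using Ai0[OF that] by auto
  qed
  have acnj: "cnj a = a" using Ai0[OF n0] A0j[OF n0] by simp
  hence areal: "a = complex_of_real (Re a)" by (simp add: complex_eq_iff)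
  define B where "B = mat m m (\<lambda>(i,j). A' $$ (Suc i, Suc j))"
  have hB: "hermitian m B" unfolding hermitian_def
  proof
    show "B \<in> carrier_mat m m" unfolding B_def by auto
    show "adj B = B"
    proof (rule eq_matI)
      fix i j assume "i < dim_row B" "j < dim_col B"
      hence ij: "i < m" "j < m" unfolding B_def by auto
      have "adj B $$ (i,j) = cnj (A' $$ (Suc j, Suc i))" using ij unfolding B_def by simp
      also have "\<dots> = adj A' $$ (Suc i, Suc j)" using ij A' unfolding n_def by simp
      also have "\<dots> = B $$ (i,j)" using ij unfolding adjA' B_def by simp
      finally show "adj B $$ (i,j) = B $$ (i,j)" .
    qed (auto simp: B_def)
  qed
  from Suc.IH[OF hB] obtain U3 d3 where u3: "unitary m U3" and B: "B = U3 * rdiag m d3 * adj U3" by blast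
  note u3' = unitaryD[OF u3]
  define P where "P = four_block_mat (1\<^sub>m 1) (0\<^sub>m 1 m) (0\<^sub>m m 1) U3"
  define d where "d = (\<lambda>i. if i = 0 then Re a else d3 (i - 1))"
  have P: "P \<in> carrier_mat n n" unfolding P_def n_def using u3' by auto
  have adjP: "adj P = four_block_mat (1\<^sub>m 1) (0\<^sub>m 1 m) (0\<^sub>m m 1) (adj U3)"
    by (rule eq_matI) (use u3' in \<open>auto simp: P_def\<close>)
  have rd: "rdiag n d = four_block_mat (rdiag 1 (\<lambda>_. Re a)) (0\<^sub>m 1 m) (0\<^sub>m m 1) (rdiag m d3)"
    by (rule eq_matI) (auto simp: d_def n_def)
  have PP: "P * adj P = 1\<^sub>m n" unfolding adjP unfolding P_def n_def
    using u3' by (subst mult_four_block_mat[of _ 1 1 _ m _ m _ _ 1 _ m]) auto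
  have PP2: "adj P * P = 1\<^sub>m n" unfolding adjP unfolding P_def n_def
    using u3' by (subst mult_four_block_mat[of _ 1 1 _ m _ m _ _ 1 _ m]) auto
  have uP: "unitary n P" unfolding unitary_def using P PP PP2 by auto
  have Prd: "P * rdiag n d = four_block_mat (rdiag 1 (\<lambda>_. Re a)) (0\<^sub>m 1 m) (0\<^sub>m m 1) (U3 * rdiag m d3)"
    unfolding rd P_def using u3' by (subst mult_four_block_mat[of _ 1 1 _ m _ m _ _ 1 _ m]) auto
  have "P * rdiag n d * adj P = four_block_mat (rdiag 1 (\<lambda>_. Re a)) (0\<^sub>m 1 m) (0\<^sub>m m 1) (U3 * rdiag m d3 * adj U3)"
    unfolding adjP Prd using u3' by (subst mult_four_block_mat[of _ 1 1 _ m _ m _ _ 1 _ m]) auto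
  also have "\<dots> = A'"
  proof (rule eq_matI)
    fix i j assume ij: "i < dim_row A'" "j < dim_col A'"
    hence ij': "i < Suc m" "j < Suc m" using A' unfolding n_def by auto
    show "four_block_mat (rdiag 1 (\<lambda>_. Re a)) (0\<^sub>m 1 m) (0\<^sub>m m 1) (U3 * rdiag m d3 * adj U3) $$ (i, j) = A' $$ (i, j)"
    proof (cases "i = 0")
      case True
      then show ?thesis using ij' A0j[of j] areal acnj u3' unfolding n_def by (cases "j = 0") auto
    next
      case False
      then obtain i' where i': "i = Suc i'" by (cases i) auto
      show ?thesis
      proof (cases "j = 0")
        case True
        then show ?thesis using ij' Ai0[of i] False u3' unfolding n_def by auto
      next
        case False
        then obtain j' where j': "j = Suc j'" by (cases j) auto
        show ?thesis using ij' u3' unfolding i' j' B[symmetric] by (simp add: B_def)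
      qed
    qed
  qed (use A' u3' in \<open>auto simp: n_def\<close>)
  finally have A'eq: "A' = P * rdiag n d * adj P" by simp
  have "A = W * (adj W * (A * (W * adj W)))"
    using w A by (simp add: unitary_cancel[OF uW])
  also have "\<dots> = W * A' * adj W" unfolding A'_def using w A by (simp add: massoc[where n=n] sq_mult[where n=n])
  also have "\<dots> = (W * P) * rdiag n d * adj (W * P)" unfolding A'eq
    using w P by (simp add: massoc[where n=n] sq_mult[where n=n] adj_mult[of _ n n _ n])
  finally have "A = (W * P) * rdiag n d * adj (W * P)" .
  moreover have "unitary n (W * P)" using unitary_mult[OF uW uP] .
  ultimately show ?case unfolding n_def by blast
qed

lemma rdiag_cong: "(\<And>i. i < n \<Longrightarrow> d i = e i) \<Longrightarrow> rdiag n d = rdiag n e"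
  by (rule eq_matI) auto

lemma smult_rdiag: "complex_of_real r \<cdot>\<^sub>m rdiag n d = rdiag n (\<lambda>i. r * d i)"
  by (rule eq_matI) auto

lemma smult_conj: assumes U: "U \<in> carrier_mat n n"
  shows "complex_of_real r \<cdot>\<^sub>m (U * rdiag n d * adj U) = U * rdiag n (\<lambda>i. r * d i) * adj U"
proof -
  have "complex_of_real r \<cdot>\<^sub>m (U * rdiag n d * adj U) = (complex_of_real r \<cdot>\<^sub>m (U * rdiag n d)) * adj U"
    using U by (subst mult_smult_assoc_mat[of _ n n _ n]) auto
  also have "complex_of_real r \<cdot>\<^sub>m (U * rdiag n d) = U * (complex_of_real r \<cdot>\<^sub>m rdiag n d)"
    using U by (subst mult_smult_distrib[of _ n n _ n]) auto
  finally show ?thesis by (simp add: smult_rdiag)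
qed

lemma mtrace_smult: "A \<in> carrier_mat n n \<Longrightarrow> mtrace (k \<cdot>\<^sub>m A) = k * mtrace A"
  unfolding mtrace_def by (auto simp: sum_distrib_left intro!: sum.cong)

lemma mtrace_conj: assumes U: "unitary n U"
  shows "mtrace (U * rdiag n d * adj U) = (\<Sum>i<n. complex_of_real (d i))"
proof -
  note u = unitaryD[OF U]
  have "mtrace (U * rdiag n d * adj U) = mtrace (U * (rdiag n d * adj U))"
    using u by (simp add: massoc[where n=n])
  also have "\<dots> = mtrace (rdiag n d * adj U * U)"
    using u by (subst mtrace_comm[of _ n n]) auto
  also have "rdiag n d * adj U * U = rdiag n d" using u by (simp add: massoc[where n=n])
  finally show ?thesis unfolding mtrace_def by simp
qed

lemma psd_diag_nonneg: assumes "psd n A" and U: "unitary n U" and A: "A = U * rdiag n d * adj U"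
  and i: "i < n"
  shows "d i \<ge> 0"
proof -
  note u = unitaryD[OF U]
  have "adj U * A * U = adj U * (U * (rdiag n d * (adj U * U)))" unfolding A
    using u by (simp add: massoc[where n=n] sq_mult[where n=n])
  also have "\<dots> = rdiag n d" using u by (simp add: unitary_cancel[OF U])
  finally have eq: "adj U * A * U = rdiag n d" .
  have Ac: "A \<in> carrier_mat n n" using assms(1) unfolding psd_def hermitian_def by auto
  define v where "v = col U i"
  have v: "v \<in> carrier_vec n" unfolding v_def using u i by auto
  have "complex_of_real (d i) = (adj U * A * U) $$ (i,i)" unfolding eq using i by simp
  also have "\<dots> = (adj U * (A * U)) $$ (i,i)" using u Ac by (simp add: massoc[where n=n])
  also have "\<dots> = row (adj U) i \<bullet> col (A * U) i" using u Ac i by simp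
  also have "row (adj U) i = map_vec cnj v" unfolding v_def using u i by (intro eq_vecI) auto
  also have "col (A * U) i = A *\<^sub>v v" unfolding v_def using u Ac i by (subst col_mult2[of _ n n _ n]) auto
  finally have "d i = Re (scalar_prod (map_vec cnj v) (A *\<^sub>v v))" by (metis Re_complex_of_real)
  thus ?thesis using assms(1) v unfolding psd_def by auto
qed

lemma cnj_mult_self: "cnj z * (complex_of_real a * z) = complex_of_real (a * (cmod z)^2)"
proof -
  have "(cmod z)^2 = (Re z)^2 + (Im z)^2" by (rule cmod_power2)
  thus ?thesis by (simp add: complex_eq_iff power2_eq_square algebra_simps)
qed

lemma trace_formula: assumes U: "unitary n U" and V: "unitary n V"
  shows "rtr (U * rdiag n p * adj U * (V * rdiag n r * adj V)) =
    (\<Sum>i<n. \<Sum>j<n. p i * r j * (cmod ((adj V * U) $$ (j,i)))^2)"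
proof -
  note u = unitaryD[OF U] and v = unitaryD[OF V]
  define M where "M = adj V * U"
  have M: "M \<in> carrier_mat n n" unfolding M_def using u v by auto
  have adjM: "adj M = adj U * V" unfolding M_def using u v by (simp add: adj_mult[of _ n n _ n])
  define Y where "Y = rdiag n p * (adj M * (rdiag n r * adj V))"
  have Y: "Y \<in> carrier_mat n n" unfolding Y_def using M v by auto
  have "U * rdiag n p * adj U * (V * rdiag n r * adj V) = U * Y"
    unfolding Y_def adjM using u v by (simp add: massoc[where n=n] sq_mult[where n=n])
  hence "mtrace (U * rdiag n p * adj U * (V * rdiag n r * adj V)) = mtrace (Y * U)"
    using mtrace_comm[of U n n Y] u Y by simp
  also have "Y * U = rdiag n p * (adj M * (rdiag n r * M))"
    unfolding Y_def M_def using u v by (simp add: massoc[where n=n] sq_mult[where n=n])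
  also have "mtrace \<dots> = (\<Sum>i<n. complex_of_real (\<Sum>j<n. p i * r j * (cmod (M $$ (j,i)))^2))"
  proof -
    have "(rdiag n p * (adj M * (rdiag n r * M))) $$ (i,i) = complex_of_real (\<Sum>j<n. p i * r j * (cmod (M $$ (j,i)))^2)"
      if i: "i < n" for i
    proof -
      have "(rdiag n p * (adj M * (rdiag n r * M))) $$ (i,i) = p i * (adj M * (rdiag n r * M)) $$ (i,i)"
        using M i by (subst rdiag_mult_left[of _ n n]) auto
      also have "(adj M * (rdiag n r * M)) $$ (i,i) = (\<Sum>j = 0..<n. cnj (M $$ (j,i)) * (r j * M $$ (j,i)))"
        using M i by (simp add: rdiag_mult_left[OF M] scalar_prod_def)
      also have "\<dots> = (\<Sum>j<n. complex_of_real (r j * (cmod (M $$ (j,i)))^2))"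
        by (auto simp: atLeast0LessThan cnj_mult_self intro!: sum.cong)
      finally show ?thesis by (simp add: sum_distrib_left mult.assoc)
    qed
    thus ?thesis unfolding mtrace_def using M by simp
  qed
  finally show ?thesis unfolding rtr_def M_def by simp
qed

lemma eig_col: assumes U: "unitary n U" and A: "A = U * rdiag n p * adj U" and i: "i < n"
  shows "A *\<^sub>v col U i = complex_of_real (p i) \<cdot>\<^sub>v col U i"
proof -
  note u = unitaryD[OF U]
  have AU: "A * U = U * rdiag n p" unfolding A using u
    by (simp add: massoc[where n=n] sq_mult[where n=n])
  have "A *\<^sub>v col U i = col (A * U) i" using u i unfolding A by (subst col_mult2[of _ n n _ n]) auto
  also have "\<dots> = complex_of_real (p i) \<cdot>\<^sub>v col U i" unfolding AU
    using u i by (intro eq_vecI) (auto simp: rdiag_mult_right[of U n n] mult.commute)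
  finally show ?thesis .
qed

lemma supp_key: assumes U: "unitary n U" and rho: "\<rho> = U * rdiag n p * adj U"
  and V: "unitary n V" and sig: "\<sigma> = V * rdiag n q * adj V"
  and sub: "supp n \<rho> \<subseteq> supp n \<sigma>" and i: "i < n" and pi: "p i \<noteq> 0"
  shows "\<exists>j<n. q j \<noteq> 0 \<and> (adj V * U) $$ (j,i) \<noteq> 0"
proof -
  note u = unitaryD[OF U] and v = unitaryD[OF V]
  have sc: "\<sigma> \<in> carrier_mat n n" unfolding sig using v by auto
  define x where "x = col U i"
  have xc: "x \<in> carrier_vec n" unfolding x_def using u i by auto
  have "x \<in> supp n \<rho>" unfolding supp_def
  proof (intro CollectI exI conjI)
    show "x = foldr (+) [x] (0\<^sub>v n)" using xc by simp
    show "\<forall>v\<in>set [x]. v \<in> carrier_vec n \<and> (\<exists>c. c \<noteq> 0 \<and> \<rho> *\<^sub>v v = c \<cdot>\<^sub>v v)"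
      using xc eig_col[OF U rho i] pi unfolding x_def by auto
  qed
  with sub have "x \<in> supp n \<sigma>" by auto
  then obtain vs where x: "x = foldr (+) vs (0\<^sub>v n)"
    and vs: "\<forall>v\<in>set vs. v \<in> carrier_vec n \<and> (\<exists>c. c \<noteq> 0 \<and> \<sigma> *\<^sub>v v = c \<cdot>\<^sub>v v)"
    unfolding supp_def by auto
  have Vs: "adj V * \<sigma> = rdiag n q * adj V" unfolding sig using v
    by (simp add: massoc[where n=n] sq_mult[where n=n] unitary_cancel[OF unitary_adj[OF V], simplified])
  have single: "(adj V *\<^sub>v w) $ j = 0" if "w \<in> carrier_vec n" "c \<noteq> 0" "\<sigma> *\<^sub>v w = c \<cdot>\<^sub>v w" "j < n" "q j = 0" for w c j
  proof -
    have "c * (adj V *\<^sub>v w) $ j = (adj V *\<^sub>v (\<sigma> *\<^sub>v w)) $ j"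
      using that v by (simp add: mult_mat_vec[of _ n n])
    also have "\<dots> = ((rdiag n q * adj V) *\<^sub>v w) $ j"
      unfolding Vs[symmetric] using that v sc by (subst assoc_mult_mat_vec[of _ n n _ n]) auto
    also have "\<dots> = q j * (adj V *\<^sub>v w) $ j"
      using that v by (simp add: rdiag_mult_left[of _ n n] scalar_prod_def sum_distrib_left mult.assoc)
    also have "\<dots> = 0" using that by simp
    finally show ?thesis using that by simp
  qed
  have claim: "foldr (+) ws (0\<^sub>v n) \<in> carrier_vec n \<and> (\<forall>j<n. q j = 0 \<longrightarrow> (adj V *\<^sub>v foldr (+) ws (0\<^sub>v n)) $ j = 0)"
    if "set ws \<subseteq> set vs" for ws
    using that
  proof (induction ws)
    case Nil
    then show ?case using v by auto
  next
    case (Cons w ws)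
    hence IH: "foldr (+) ws (0\<^sub>v n) \<in> carrier_vec n" "\<And>j. j < n \<Longrightarrow> q j = 0 \<Longrightarrow> (adj V *\<^sub>v foldr (+) ws (0\<^sub>v n)) $ j = 0"
      by auto
    from Cons.prems vs obtain c where w: "w \<in> carrier_vec n" "c \<noteq> 0" "\<sigma> *\<^sub>v w = c \<cdot>\<^sub>v w" by auto
    show ?case
    proof (intro conjI allI impI)
      show "foldr (+) (w # ws) (0\<^sub>v n) \<in> carrier_vec n" using w IH by simp
      fix j assume j: "j < n" "q j = 0"
      have "(adj V *\<^sub>v foldr (+) (w # ws) (0\<^sub>v n)) $ j = (adj V *\<^sub>v w) $ j + (adj V *\<^sub>v foldr (+) ws (0\<^sub>v n)) $ j"
        using w IH v j by (simp add: mult_add_distrib_mat_vec[of _ n n])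
      also have "\<dots> = 0" using single[OF w j] IH(2)[OF j] by simp
      finally show "(adj V *\<^sub>v foldr (+) (w # ws) (0\<^sub>v n)) $ j = 0" .
    qed
  qed
  from claim[of vs] x have zero: "\<And>j. j < n \<Longrightarrow> q j = 0 \<Longrightarrow> (adj V *\<^sub>v x) $ j = 0" by auto
  have x0: "x \<noteq> 0\<^sub>v n"
  proof
    assume "x = 0\<^sub>v n"
    hence "adj U *\<^sub>v x = 0\<^sub>v n" using u by (intro eq_vecI) (auto simp: scalar_prod_def)
    moreover have "adj U *\<^sub>v x = unit_vec n i" unfolding x_def using u i
      by (subst col_mult2[of _ n n _ n, symmetric]) auto
    ultimately have "unit_vec n i $ i = (0\<^sub>v n :: complex vec) $ i" by simp
    thus False using i by simp
  qed
  have "adj V *\<^sub>v x \<noteq> 0\<^sub>v n"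
  proof
    assume h: "adj V *\<^sub>v x = 0\<^sub>v n"
    have "x = V *\<^sub>v (adj V *\<^sub>v x)" using v xc
      by (subst assoc_mult_mat_vec[of _ n n _ n, symmetric]) auto
    also have "\<dots> = 0\<^sub>v n" unfolding h using v by (intro eq_vecI) (auto simp: scalar_prod_def)
    finally show False using x0 by simp
  qed
  then obtain j where j: "j < n" "(adj V *\<^sub>v x) $ j \<noteq> 0"
    using v by (metis carrier_matD(1) dim_mult_mat_vec eq_vecI index_zero_vec(1) index_zero_vec(2))
  have "(adj V *\<^sub>v x) $ j = (adj V * U) $$ (j,i)"
    unfolding x_def using u v i j by (subst col_mult2[of _ n n _ n, symmetric]) auto
  thus ?thesis using j zero by auto
qed

lemma pw1: fixes p c \<alpha> :: real assumes "p \<ge> 0" "c > 0" "\<alpha> > 0"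
  shows "((1/c) * p powr \<alpha>) powr (1/\<alpha>) = c powr (-1/\<alpha>) * p"
proof (cases "p = 0")
  case False
  have "((1/c) * p powr \<alpha>) powr (1/\<alpha>) = (1/c) powr (1/\<alpha>) * p powr (\<alpha> * (1/\<alpha>))"
    unfolding powr_mult powr_powr by (rule refl)
  also have "p powr (\<alpha> * (1/\<alpha>)) = p" using assms False by simp
  also have "(1/c) powr (1/\<alpha>) = c powr (-1/\<alpha>)" using assms
    by (simp add: powr_divide powr_minus_divide)
  finally show ?thesis .
qed simp

lemma pw2: fixes q s \<alpha> :: real assumes "q \<ge> 0" "s > 0" "\<alpha> > 0"
  shows "((1/s) * q powr \<alpha>) powr (1 - 1/\<alpha>) = s powr (1/\<alpha> - 1) * q powr (\<alpha> - 1)"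
proof (cases "q = 0")
  case False
  have "((1/s) * q powr \<alpha>) powr (1 - 1/\<alpha>) = (1/s) powr (1 - 1/\<alpha>) * q powr (\<alpha> * (1 - 1/\<alpha>))"
    unfolding powr_mult powr_powr by (rule refl)
  also have "\<alpha> * (1 - 1/\<alpha>) = \<alpha> - 1" using assms by (simp add: field_simps)
  also have "(1/s) powr (1 - 1/\<alpha>) = s powr (1/\<alpha> - 1)" using assms
    by (simp add: powr_divide powr_minus_divide[symmetric])
  finally show ?thesis .
qed simp

lemma smult_prod: fixes X Y :: "complex mat" assumes "X \<in> carrier_mat n n" "Y \<in> carrier_mat n n"
  shows "(k1 \<cdot>\<^sub>m X) * (k2 \<cdot>\<^sub>m Y) = (k1 * k2) \<cdot>\<^sub>m (X * Y)"
proof -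
  have "(k1 \<cdot>\<^sub>m X) * (k2 \<cdot>\<^sub>m Y) = k1 \<cdot>\<^sub>m (X * (k2 \<cdot>\<^sub>m Y))" by (rule mult_smult_assoc_mat) (use assms in auto)
  also have "X * (k2 \<cdot>\<^sub>m Y) = k2 \<cdot>\<^sub>m (X * Y)" by (rule mult_smult_distrib) (use assms in auto)
  finally show ?thesis using assms by (auto intro!: eq_matI)
qed

lemma pos_index: fixes f :: "nat \<Rightarrow> real" assumes "(\<Sum>i<n. f i) = 1" "\<And>i. i < n \<Longrightarrow> f i \<ge> 0"
  shows "\<exists>i<n. f i > 0"
proof (rule ccontr)
  assume "\<not> ?thesis"
  hence "\<And>i. i < n \<Longrightarrow> f i = 0" using assms(2) by force
  hence "(\<Sum>i<n. f i) = 0" by simp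
  with assms(1) show False by simp
qed

theorem lemma9:
  fixes n :: nat and \<alpha> :: real and \<rho> \<sigma> :: "complex mat"
  assumes "\<alpha> > 0" and "\<alpha> \<noteq> 1"
    and "density n \<rho>" and "density n \<sigma>"
    and "supp n \<rho> \<subseteq> supp n \<sigma>"
  shows "S_alpha n \<alpha> \<rho> \<sigma> = petz n (1 / \<alpha>) (normpow n \<rho> \<alpha>) (normpow n \<sigma> \<alpha>)"
proof -
  have psr: "psd n \<rho>" and tr1: "mtrace \<rho> = 1" using assms(3) unfolding density_def by auto
  have pss: "psd n \<sigma>" and tr2: "mtrace \<sigma> = 1" using assms(4) unfolding density_def by auto
  obtain U p where U: "unitary n U" and rho: "\<rho> = U * rdiag n p * adj U"
    using spectral psr unfolding psd_def by blast
  obtain V q where V: "unitary n V" and sig: "\<sigma> = V * rdiag n q * adj V"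
    using spectral pss unfolding psd_def by blast
  note u = unitaryD[OF U] and v = unitaryD[OF V]
  have hp: "\<And>i. i < n \<Longrightarrow> p i \<ge> 0" using psd_diag_nonneg[OF psr U rho] .
  have hq: "\<And>i. i < n \<Longrightarrow> q i \<ge> 0" using psd_diag_nonneg[OF pss V sig] .
  have sp: "(\<Sum>i<n. p i) = 1"
  proof -
    have "complex_of_real (\<Sum>i<n. p i) = 1" using tr1 mtrace_conj[OF U, of p] rho by simp
    thus ?thesis by (metis of_real_eq_1_iff)
  qed
  have sq: "(\<Sum>i<n. q i) = 1"
  proof -
    have "complex_of_real (\<Sum>i<n. q i) = 1" using tr2 mtrace_conj[OF V, of q] sig by simp
    thus ?thesis by (metis of_real_eq_1_iff)
  qed
  obtain i0 where i0: "i0 < n" "p i0 > 0" using pos_index[OF sp hp] by blast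
  obtain j0 where j0: "j0 < n" "q j0 > 0" using pos_index[OF sq hq] by blast
  define c where "c = (\<Sum>i<n. p i powr \<alpha>)"
  define s where "s = (\<Sum>i<n. q i powr \<alpha>)"
  have c: "c > 0" unfolding c_def by (rule sum_pos2[of _ i0]) (use i0 in auto)
  have s: "s > 0" unfolding s_def by (rule sum_pos2[of _ j0]) (use j0 in auto)
  have mr: "mpow n \<rho> \<alpha> = U * rdiag n (\<lambda>i. p i powr \<alpha>) * adj U" by (rule mpow_eq[OF U rho])
  have ms: "mpow n \<sigma> \<alpha> = V * rdiag n (\<lambda>i. q i powr \<alpha>) * adj V" by (rule mpow_eq[OF V sig])
  have ms1: "mpow n \<sigma> (\<alpha> - 1) = V * rdiag n (\<lambda>i. q i powr (\<alpha> - 1)) * adj V" by (rule mpow_eq[OF V sig])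
  have trc: "mtrace (mpow n \<rho> \<alpha>) = complex_of_real c" unfolding mr mtrace_conj[OF U] c_def by simp
  have trs: "mtrace (mpow n \<sigma> \<alpha>) = complex_of_real s" unfolding ms mtrace_conj[OF V] s_def by simp
  have nr: "normpow n \<rho> \<alpha> = U * rdiag n (\<lambda>i. (1/c) * p i powr \<alpha>) * adj U"
    unfolding normpow_def trc unfolding mr using smult_conj[OF u(1), of "1/c"] by simp
  have ns: "normpow n \<sigma> \<alpha> = V * rdiag n (\<lambda>i. (1/s) * q i powr \<alpha>) * adj V"
    unfolding normpow_def trs unfolding ms using smult_conj[OF v(1), of "1/s"] by simp
  have m1: "mpow n (normpow n \<rho> \<alpha>) (1/\<alpha>) = complex_of_real (c powr (-1/\<alpha>)) \<cdot>\<^sub>m \<rho>"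
  proof -
    have "mpow n (normpow n \<rho> \<alpha>) (1/\<alpha>) = U * rdiag n (\<lambda>i. ((1/c) * p i powr \<alpha>) powr (1/\<alpha>)) * adj U"
      by (rule mpow_eq[OF U nr])
    also have "rdiag n (\<lambda>i. ((1/c) * p i powr \<alpha>) powr (1/\<alpha>)) = rdiag n (\<lambda>i. c powr (-1/\<alpha>) * p i)"
      by (rule rdiag_cong) (use pw1 hp c assms(1) in auto)
    finally show ?thesis unfolding rho using smult_conj[OF u(1)] by simp
  qed
  have m2: "mpow n (normpow n \<sigma> \<alpha>) (1 - 1/\<alpha>) = complex_of_real (s powr (1/\<alpha> - 1)) \<cdot>\<^sub>m mpow n \<sigma> (\<alpha> - 1)"
  proof -
    have "mpow n (normpow n \<sigma> \<alpha>) (1 - 1/\<alpha>) = V * rdiag n (\<lambda>i. ((1/s) * q i powr \<alpha>) powr (1 - 1/\<alpha>)) * adj V"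
      by (rule mpow_eq[OF V ns])
    also have "rdiag n (\<lambda>i. ((1/s) * q i powr \<alpha>) powr (1 - 1/\<alpha>)) = rdiag n (\<lambda>i. s powr (1/\<alpha> - 1) * q i powr (\<alpha> - 1))"
      by (rule rdiag_cong) (use pw2 hq s assms(1) in auto)
    finally show ?thesis unfolding ms1 using smult_conj[OF v(1)] by simp
  qed
  define T where "T = rtr (\<rho> * mpow n \<sigma> (\<alpha> - 1))"
  have Tf: "T = (\<Sum>i<n. \<Sum>j<n. p i * q j powr (\<alpha> - 1) * (cmod ((adj V * U) $$ (j,i)))^2)"
    unfolding T_def rho ms1 by (rule trace_formula[OF U V])
  have T: "T > 0"
  proof -
    obtain j where j: "j < n" "q j \<noteq> 0" "(adj V * U) $$ (j,i0) \<noteq> 0"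
      using supp_key[OF U rho V sig assms(5) i0(1)] i0(2) by auto
    have qj: "q j > 0" using hq[OF j(1)] j(2) by simp
    have inner: "0 < (\<Sum>j<n. p i0 * q j powr (\<alpha> - 1) * (cmod ((adj V * U) $$ (j,i0)))^2)"
      by (rule sum_pos2[of _ j]) (use j qj i0 in auto)
    have "0 < (\<Sum>i<n. \<Sum>j<n. p i * q j powr (\<alpha> - 1) * (cmod ((adj V * U) $$ (j,i)))^2)"
      by (rule sum_pos2[of _ i0]) (use inner i0 hp in \<open>auto intro!: sum_nonneg\<close>)
    thus ?thesis unfolding Tf .
  qed
  have rc: "rtr (mpow n \<rho> \<alpha>) = c" unfolding rtr_def trc by simp
  have rs: "rtr (mpow n \<sigma> \<alpha>) = s" unfolding rtr_def trs by simp
  have sc1: "\<rho> \<in> carrier_mat n n" unfolding rho using u by auto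
  have sc2: "mpow n \<sigma> (\<alpha> - 1) \<in> carrier_mat n n" unfolding ms1 using v by auto
  have prod: "rtr (mpow n (normpow n \<rho> \<alpha>) (1/\<alpha>) * mpow n (normpow n \<sigma> \<alpha>) (1 - 1/\<alpha>))
      = c powr (-1/\<alpha>) * s powr (1/\<alpha> - 1) * T"
    unfolding m1 m2 smult_prod[OF sc1 sc2] rtr_def T_def
    using sc1 sc2 by (simp add: mtrace_smult[of _ n])
  have lnp: "ln (c powr (-1/\<alpha>) * s powr (1/\<alpha> - 1) * T) = (-1/\<alpha>) * ln c + (1/\<alpha> - 1) * ln s + ln T"
    using c s T by (simp add: ln_mult_pos)
  have "petz n (1 / \<alpha>) (normpow n \<rho> \<alpha>) (normpow n \<sigma> \<alpha>) = 1 / (1/\<alpha> - 1) * ((-1/\<alpha>) * ln c + (1/\<alpha> - 1) * ln s + ln T)"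
    unfolding petz_def prod lnp by simp
  also have "\<dots> = \<alpha> / (1 - \<alpha>) * ln T - 1 / (1 - \<alpha>) * ln c + ln s"
  proof -
    have a: "1 - \<alpha> \<noteq> 0" "\<alpha> \<noteq> 0" using assms(1,2) by auto
    have e: "1 / (1/\<alpha> - 1) = \<alpha> / (1 - \<alpha>)" using a by (simp add: field_simps)
    have h1: "\<alpha> / (1 - \<alpha>) * (-1/\<alpha>) = - (1 / (1 - \<alpha>))" using a by (simp add: field_simps)
    have h2: "\<alpha> / (1 - \<alpha>) * (1/\<alpha> - 1) = 1" using a by (simp add: field_simps)
    have "\<alpha> / (1 - \<alpha>) * ((-1/\<alpha>) * ln c + (1/\<alpha> - 1) * ln s + ln T)
       = (\<alpha> / (1 - \<alpha>) * (-1/\<alpha>)) * ln c + (\<alpha> / (1 - \<alpha>) * (1/\<alpha> - 1)) * ln s + \<alpha> / (1 - \<alpha>) * ln T"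
      by (simp only: distrib_left mult.assoc)
    also have "\<dots> = \<alpha> / (1 - \<alpha>) * ln T - 1 / (1 - \<alpha>) * ln c + ln s" unfolding h1 h2 by simp
    finally show ?thesis unfolding e .
  qed
  also have "\<dots> = S_alpha n \<alpha> \<rho> \<sigma>" unfolding S_alpha_def T_def rc rs ..
  finally show ?thesis ..
qed

end
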